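(* For any RES-graph $(G,\gamma,b)$, any shifting $\gamma'$ of $\gamma$, and any set of vertices $X$ with $b\in X$, $$\tilde{\nu}(G,\gamma,b)\le \gamma'(E(X))+\tfrac12|\delta(X)|-\mathrm{odd}_{\gamma'}(G-X).$$
   Context: Graphs are finite and may have loops and multiple edges. Each edge consists of two half-edges; each half-edge is incident to a vertex, and a loop has both half-edges at the same vertex, so it contributes $2$ to that vertex's degree. An arc is an ordered pair $(h_1,h_2)$ of half-edges forming an edge; its tail is the vertex of $h_1$ and its head is the vertex of $h_2$. A trail is a sequence of arcs whose edges are pairwise distinct and such that the head of each arc (other than the last) is the tail of the next. A circuit is a trail whose head equals its tail. A circuit hits a vertex $v$ if it contains an arc incident to $v$. A circuit-decomposition of $G$ is a collection of circuits such that every edge of $G$ is used by exactly one circuit of the collection. A graph is Eulerian if it is connected and every vertex has even degree. A signature of $G$ is a function $\gamma:E(G)\to\mathbb{Z}_2$. The weight of a trail is the sum in $\mathbb{Z}_2$ of $\gamma$ over its edges, and a trail (or edge) is zero or non-zero according to its weight. Shifting at a vertex $v$ means adding $1$ to the weight of every non-loop edge incident to $v$. A shifting of $\gamma$ is any signature obtainable from $\gamma$ by a sequence of shiftings at vertices. An RES-graph is a triple $(G,\gamma,b)$ where $G$ is an Eulerian graph, $\gamma$ is a signature of $G$, and $b\in V(G)$. The flooding number $\tilde{\nu}(G,\gamma,b)$ is the maximum size of a circuit-decomposition of $G$ in which every circuit is non-zero and hits $b$; it is $0$ if no such decomposition exists. For $X\subseteq V(G)$, $E(X)$ is the set of edges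 with both ends in $X$, and $\delta(X)$ is the set of edges with exactly one end in $X$. For an edge set $F$, $\gamma'(F)$ denotes the number of edges of $F$ with weight $1$ under $\gamma'$. A vertex set $Y$ is $\gamma'$-odd if the parity of $\gamma'(E(Y)\cup\delta(Y))$ differs from the parity of $|\delta(Y)|/2$. Finally, $\mathrm{odd}_{\gamma'}(G-X)$ is the number of components of $G-X$ whose vertex set is $\gamma'$-odd. *)

theory Defs
  imports Complex_Main "HOL-Library.Z2"
begin

text \<open>
A finite multigraph with loops is given by a vertex set V, an edge set E and an
end map ep :: 'e => bool => 'v.  Edge e has two half-edges (e,False) and (e,True),
incident to ep e False and ep e True respectively; a loop has ep e False = ep e True.
An arc is represented by a pair (e,d): it is the ordered pair of half-edges
((e,d),(e, not d)); its tail is ep e d and its head is ep e (not d).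
\<close>

definition graph :: "'v set \<Rightarrow> 'e set \<Rightarrow> ('e \<Rightarrow> bool \<Rightarrow> 'v) \<Rightarrow> bool" where
  "graph V E ep \<longleftrightarrow> finite V \<and> finite E \<and> (\<forall>e\<in>E. \<forall>d. ep e d \<in> V)"

definition is_loop :: "('e \<Rightarrow> bool \<Rightarrow> 'v) \<Rightarrow> 'e \<Rightarrow> bool" where
  "is_loop ep e \<longleftrightarrow> ep e False = ep e True"

text \<open>degree = number of half-edges at v (a loop counts twice)\<close>
definition degree :: "'e set \<Rightarrow> ('e \<Rightarrow> bool \<Rightarrow> 'v) \<Rightarrow> 'v \<Rightarrow> nat" where
  "degree E ep v = card {(e, d). e \<in> E \<and> ep e d = v}"

definition adj_in :: "'v set \<Rightarrow> 'e set \<Rightarrow> ('e \<Rightarrow> bool \<Rightarrow> 'v) \<Rightarrow> ('v \<times> 'v) set" where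
  "adj_in W E ep = {(ep e d, ep e (\<not> d)) | e d. e \<in> E \<and> ep e False \<in> W \<and> ep e True \<in> W}"

definition connected_graph :: "'v set \<Rightarrow> 'e set \<Rightarrow> ('e \<Rightarrow> bool \<Rightarrow> 'v) \<Rightarrow> bool" where
  "connected_graph V E ep \<longleftrightarrow> V \<noteq> {} \<and> (\<forall>u\<in>V. \<forall>v\<in>V. (u, v) \<in> (adj_in V E ep)\<^sup>*)"

definition eulerian :: "'v set \<Rightarrow> 'e set \<Rightarrow> ('e \<Rightarrow> bool \<Rightarrow> 'v) \<Rightarrow> bool" where
  "eulerian V E ep \<longleftrightarrow> graph V E ep \<and> connected_graph V E ep \<and> (\<forall>v\<in>V. even (degree E ep v))"

definition tail :: "('e \<Rightarrow> bool \<Rightarrow> 'v) \<Rightarrow> 'e \<times> bool \<Rightarrow> 'v" where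
  "tail ep a = ep (fst a) (snd a)"

definition head :: "('e \<Rightarrow> bool \<Rightarrow> 'v) \<Rightarrow> 'e \<times> bool \<Rightarrow> 'v" where
  "head ep a = ep (fst a) (\<not> snd a)"

definition trail :: "'e set \<Rightarrow> ('e \<Rightarrow> bool \<Rightarrow> 'v) \<Rightarrow> ('e \<times> bool) list \<Rightarrow> bool" where
  "trail E ep T \<longleftrightarrow> set (map fst T) \<subseteq> E \<and> distinct (map fst T) \<and>
     (\<forall>i. Suc i < length T \<longrightarrow> head ep (T ! i) = tail ep (T ! Suc i))"

definition circuit :: "'e set \<Rightarrow> ('e \<Rightarrow> bool \<Rightarrow> 'v) \<Rightarrow> ('e \<times> bool) list \<Rightarrow> bool" where
  "circuit E ep T \<longleftrightarrow> trail E ep T \<and> T \<noteq> [] \<and> head ep (last T) = tail ep (hd T)"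

definition hits :: "('e \<Rightarrow> bool \<Rightarrow> 'v) \<Rightarrow> ('e \<times> bool) list \<Rightarrow> 'v \<Rightarrow> bool" where
  "hits ep T v \<longleftrightarrow> (\<exists>a\<in>set T. tail ep a = v \<or> head ep a = v)"

definition circuit_decomposition :: "'e set \<Rightarrow> ('e \<Rightarrow> bool \<Rightarrow> 'v) \<Rightarrow> ('e \<times> bool) list list \<Rightarrow> bool" where
  "circuit_decomposition E ep Cs \<longleftrightarrow> (\<forall>C\<in>set Cs. circuit E ep C) \<and>
     (\<forall>e\<in>E. \<exists>!i. i < length Cs \<and> e \<in> fst ` set (Cs ! i))"

definition weight :: "('e \<Rightarrow> bit) \<Rightarrow> ('e \<times> bool) list \<Rightarrow> bit" where
  "weight \<gamma> T = sum_list (map (\<lambda>a. \<gamma> (fst a)) T)"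

definition flooding_number ::
  "'v set \<Rightarrow> 'e set \<Rightarrow> ('e \<Rightarrow> bool \<Rightarrow> 'v) \<Rightarrow> ('e \<Rightarrow> bit) \<Rightarrow> 'v \<Rightarrow> nat" where
  "flooding_number V E ep \<gamma> b = Max ({0} \<union> {length Cs | Cs. circuit_decomposition E ep Cs \<and>
      (\<forall>C\<in>set Cs. weight \<gamma> C \<noteq> 0 \<and> hits ep C b)})"

definition shift_at :: "'e set \<Rightarrow> ('e \<Rightarrow> bool \<Rightarrow> 'v) \<Rightarrow> 'v \<Rightarrow> ('e \<Rightarrow> bit) \<Rightarrow> ('e \<Rightarrow> bit)" where
  "shift_at E ep v \<gamma> = (\<lambda>e. if e \<in> E \<and> \<not> is_loop ep e \<and> (ep e False = v \<or> ep e True = v)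
                           then \<gamma> e + 1 else \<gamma> e)"

inductive is_shifting :: "'v set \<Rightarrow> 'e set \<Rightarrow> ('e \<Rightarrow> bool \<Rightarrow> 'v) \<Rightarrow> ('e \<Rightarrow> bit) \<Rightarrow> ('e \<Rightarrow> bit) \<Rightarrow> bool"
  for V E ep \<gamma> where
  refl: "is_shifting V E ep \<gamma> \<gamma>"
| step: "is_shifting V E ep \<gamma> \<gamma>' \<Longrightarrow> v \<in> V \<Longrightarrow> is_shifting V E ep \<gamma> (shift_at E ep v \<gamma>')"

definition E_in :: "'e set \<Rightarrow> ('e \<Rightarrow> bool \<Rightarrow> 'v) \<Rightarrow> 'v set \<Rightarrow> 'e set" where
  "E_in E ep X = {e \<in> E. ep e False \<in> X \<and> ep e True \<in> X}"

definition delta :: "'e set \<Rightarrow> ('e \<Rightarrow> bool \<Rightarrow> 'v) \<Rightarrow> 'v set \<Rightarrow> 'e set" where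
  "delta E ep X = {e \<in> E. (ep e False \<in> X) \<noteq> (ep e True \<in> X)}"

definition wcount :: "('e \<Rightarrow> bit) \<Rightarrow> 'e set \<Rightarrow> nat" where
  "wcount \<gamma> F = card {e \<in> F. \<gamma> e = 1}"

definition odd_set :: "'e set \<Rightarrow> ('e \<Rightarrow> bool \<Rightarrow> 'v) \<Rightarrow> ('e \<Rightarrow> bit) \<Rightarrow> 'v set \<Rightarrow> bool" where
  "odd_set E ep \<gamma> Y \<longleftrightarrow>
     odd (wcount \<gamma> (E_in E ep Y \<union> delta E ep Y)) \<noteq> odd (card (delta E ep Y) div 2)"

definition components_minus :: "'v set \<Rightarrow> 'e set \<Rightarrow> ('e \<Rightarrow> bool \<Rightarrow> 'v) \<Rightarrow> 'v set \<Rightarrow> 'v set set" where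
  "components_minus V E ep X =
     {{u \<in> V - X. (v, u) \<in> (adj_in (V - X) E ep)\<^sup>*} | v. v \<in> V - X}"

definition odd_components :: "'v set \<Rightarrow> 'e set \<Rightarrow> ('e \<Rightarrow> bool \<Rightarrow> 'v) \<Rightarrow> ('e \<Rightarrow> bit) \<Rightarrow> 'v set \<Rightarrow> nat" where
  "odd_components V E ep \<gamma> X = card {C \<in> components_minus V E ep X. odd_set E ep \<gamma> C}"

end

theory Submission
  imports Defs
begin
lemma bit_cases2: "(x::bit) = 0 \<or> x = 1" by (cases x) auto
lemma bit_of_nat_0: "of_nat n = (0::bit) \<longleftrightarrow> even n"
proof (induction n)
  case (Suc n)
  have "(of_nat (Suc n)::bit) = 1 + of_nat n" by simp
  then show ?case using Suc bit_cases2[of "of_nat n"] by auto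
qed simp

lemma bit_add_self: "(x::bit) + x = 0" by simp

definition ind :: "bool \<Rightarrow> bit" where "ind P = (if P then 1 else 0)"

lemma card_bit: "finite A \<Longrightarrow> of_nat (card {x\<in>A. P x}) = (\<Sum>x\<in>A. ind (P x))"
proof -
  assume f: "finite A"
  have "(of_nat (card {x\<in>A. P x})::bit) = (\<Sum>x\<in>{x\<in>A. P x}. 1)" by simp
  also have "\<dots> = (\<Sum>x\<in>A. if P x then 1 else 0)" using f by (rule sum.inter_filter)
  finally show ?thesis by (simp add: ind_def)
qed

lemma circ_rot: assumes "circuit E ep C"
  shows "map (head ep) C = rotate1 (map (tail ep) C)"
proof (rule nth_equalityI)
  show "length (map (head ep) C) = length (rotate1 (map (tail ep) C))" by simp
  have ne: "C \<noteq> []"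
    and tr: "\<forall>i. Suc i < length C \<longrightarrow> head ep (C ! i) = tail ep (C ! Suc i)"
    and cl: "head ep (last C) = tail ep (hd C)" using assms unfolding circuit_def trail_def by auto
  fix i assume "i < length (map (head ep) C)"
  then have i: "i < length C" by simp
  have lhs: "map (head ep) C ! i = head ep (C ! i)" using i by (rule nth_map)
  have rhs: "rotate1 (map (tail ep) C) ! i = tail ep (C ! (Suc i mod length C))"
  proof -
    have "rotate1 (map (tail ep) C) ! i = map (tail ep) C ! (Suc i mod length (map (tail ep) C))"
      using i by (intro nth_rotate1) simp
    also have "\<dots> = tail ep (C ! (Suc i mod length C))"
      using ne by (simp add: nth_map)
    finally show ?thesis by simp
  qed
  show "map (head ep) C ! i = rotate1 (map (tail ep) C) ! i"
  proof (cases "Suc i < length C")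
    case True
    then have "Suc i mod length C = Suc i" by simp
    then show ?thesis unfolding lhs rhs using tr True by simp
  next
    case False
    then have "Suc i = length C" using i by simp
    then have m: "Suc i mod length C = 0" and l: "i = length C - 1" by simp_all
    have "C ! i = last C" unfolding l using ne by (simp add: last_conv_nth)
    moreover have "C ! 0 = hd C" using ne by (simp add: hd_conv_nth)
    ultimately show ?thesis unfolding lhs rhs m using cl by simp
  qed
qed

lemma sum_list_rotate1: "sum_list (rotate1 (xs::'a::comm_monoid_add list)) = sum_list xs"
proof (cases xs)
  case (Cons a ys)
  have "sum_list (rotate1 xs) = sum_list ys + a" using Cons by simp
  also have "\<dots> = a + sum_list ys" by (rule add.commute)
  finally show ?thesis using Cons by simp
qed simp

lemma circ_sum_ht: assumes "circuit E ep C"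
  shows "sum_list (map (\<lambda>a. (f::'v \<Rightarrow> 'a::comm_monoid_add) (head ep a)) C)
       = sum_list (map (\<lambda>a. f (tail ep a)) C)"
proof -
  have "map (\<lambda>a. f (head ep a)) C = map f (map (head ep) C)" by simp
  also have "\<dots> = map f (rotate1 (map (tail ep) C))" using circ_rot[OF assms] by simp
  also have "\<dots> = rotate1 (map (\<lambda>a. f (tail ep a)) C)" by (simp add: rotate1_map[symmetric] o_def)
  finally show ?thesis by (simp add: sum_list_rotate1)
qed

lemma circ_basic: assumes "circuit E ep C"
  shows "fst ` set C \<subseteq> E" "finite (fst ` set C)" "distinct C" "inj_on fst (set C)"
  using assms unfolding circuit_def trail_def by (auto simp: distinct_map)

lemma circ_sum_edges: assumes "circuit E ep C"
  shows "sum_list (map (\<lambda>a. g (fst a)) C) = sum (g::'e \<Rightarrow> 'a::comm_monoid_add) (fst ` set C)"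
proof -
  have "distinct (map fst C)" using assms unfolding circuit_def trail_def by auto
  then have "sum_list (map g (map fst C)) = sum g (set (map fst C))"
    by (rule sum_list_distinct_conv_sum_set)
  then show ?thesis by (simp add: o_def)
qed

lemma ind_delta: "e \<in> E \<Longrightarrow> ind (e \<in> delta E ep Y) = ind (ep e d \<in> Y) + ind (ep e (\<not> d) \<in> Y)"
  by (cases d) (auto simp: ind_def delta_def)

lemma circ_delta_even: assumes "circuit E ep C"
  shows "even (card (fst ` set C \<inter> delta E ep Y))"
proof -
  let ?F = "fst ` set C"
  have fin: "finite ?F" using circ_basic[OF assms] by auto
  have "(of_nat (card (?F \<inter> delta E ep Y))::bit) = of_nat (card {e\<in>?F. e \<in> delta E ep Y})"
  proof -
    have "?F \<inter> delta E ep Y = {e\<in>?F. e \<in> delta E ep Y}" by blast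
    then show ?thesis by simp
  qed
  also have "\<dots> = (\<Sum>e\<in>?F. ind (e \<in> delta E ep Y))" by (rule card_bit[OF fin])
  also have "\<dots> = sum_list (map (\<lambda>a. ind (fst a \<in> delta E ep Y)) C)"
    using circ_sum_edges[OF assms, of "\<lambda>e. ind (e \<in> delta E ep Y)"] by simp
  also have "\<dots> = sum_list (map (\<lambda>a. ind (tail ep a \<in> Y) + ind (head ep a \<in> Y)) C)"
  proof (rule arg_cong[where f=sum_list], rule map_cong[OF HOL.refl])
    fix a assume "a \<in> set C"
    then have "fst a \<in> E" using circ_basic[OF assms] by auto
    then show "ind (fst a \<in> delta E ep Y) = ind (tail ep a \<in> Y) + ind (head ep a \<in> Y)"
      using ind_delta[of "fst a" E ep Y "snd a"] by (simp add: tail_def head_def)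
  qed
  also have "\<dots> = sum_list (map (\<lambda>a. ind (tail ep a \<in> Y)) C) + sum_list (map (\<lambda>a. ind (head ep a \<in> Y)) C)"
    by (rule sum_list_addf)
  also have "\<dots> = 0"
  proof -
    have hs: "sum_list (map (\<lambda>a. ind (head ep a \<in> Y)) C) = sum_list (map (\<lambda>a. ind (tail ep a \<in> Y)) C)"
      by (rule circ_sum_ht[OF assms])
    show ?thesis unfolding hs by (rule bit_add_self)
  qed
  finally have "(of_nat (card (?F \<inter> delta E ep Y))::bit) = 0" .
  then show ?thesis by (metis bit_of_nat_0)
qed

lemma weight_set: "circuit E ep C \<Longrightarrow> weight g C = sum g (fst ` set C)"
  unfolding weight_def using circ_sum_edges[of E ep C g] by simp

lemma shift_weight: assumes "circuit E ep C"
  shows "weight (shift_at E ep v g) C = weight g C"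
proof -
  let ?F = "fst ` set C"
  have fin: "finite ?F" and sub: "?F \<subseteq> E" using circ_basic[OF assms] by auto
  have "weight (shift_at E ep v g) C = (\<Sum>e\<in>?F. g e + ind (e \<in> delta E ep {v}))"
    unfolding weight_set[OF assms]
  proof (rule sum.cong[OF HOL.refl])
    fix e assume "e \<in> ?F"
    then have "e \<in> E" using sub by auto
    then show "shift_at E ep v g e = g e + ind (e \<in> delta E ep {v})"
      unfolding shift_at_def ind_def delta_def is_loop_def by auto
  qed
  also have "\<dots> = weight g C + (\<Sum>e\<in>?F. ind (e \<in> delta E ep {v}))"
    unfolding weight_set[OF assms] by (rule sum.distrib)
  also have "(\<Sum>e\<in>?F. ind (e \<in> delta E ep {v})) = of_nat (card {e\<in>?F. e \<in> delta E ep {v}})"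
    using card_bit[OF fin] by metis
  also have "{e\<in>?F. e \<in> delta E ep {v}} = ?F \<inter> delta E ep {v}" by blast
  also have "(of_nat (card (?F \<inter> delta E ep {v}))::bit) = 0"
    using circ_delta_even[OF assms] bit_of_nat_0 by metis
  finally show ?thesis by simp
qed

lemma shifting_weight: "is_shifting V E ep \<gamma> \<gamma>' \<Longrightarrow> circuit E ep C \<Longrightarrow> weight \<gamma>' C = weight \<gamma> C"
  by (induction rule: is_shifting.induct) (auto simp: shift_weight)

lemma bit_eq_ind: "(x::bit) = ind (x = 1)"
  using bit_cases2[of x] by (auto simp: ind_def)

lemma weight_card: assumes "circuit E ep C"
  shows "weight g C = of_nat (card {e \<in> fst ` set C. g e = 1})"
proof -
  have fin: "finite (fst ` set C)" using circ_basic[OF assms] by auto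
  have "weight g C = (\<Sum>e\<in>fst ` set C. ind (g e = 1))"
    unfolding weight_set[OF assms] using bit_eq_ind by (metis (no_types, lifting) sum.cong)
  then show ?thesis using card_bit[OF fin] by metis
qed

lemma circ_side: assumes "circuit E ep C" "fst ` set C \<inter> delta E ep Y = {}" "hits ep C b" "b \<notin> Y"
    "a \<in> set C"
  shows "tail ep a \<notin> Y \<and> head ep a \<notin> Y"
proof -
  have sub: "fst ` set C \<subseteq> E" using circ_basic[OF assms(1)] by auto
  have arc: "tail ep a' \<in> Y \<longleftrightarrow> head ep a' \<in> Y" if "a' \<in> set C" for a'
  proof -
    have "fst a' \<in> E" "fst a' \<notin> delta E ep Y" using that sub assms(2) by auto
    then have "(ep (fst a') False \<in> Y) = (ep (fst a') True \<in> Y)" unfolding delta_def by auto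
    then show ?thesis unfolding tail_def head_def by (cases "snd a'") auto
  qed
  have ne: "C \<noteq> []" and tr: "\<forall>i. Suc i < length C \<longrightarrow> head ep (C ! i) = tail ep (C ! Suc i)"
    using assms(1) unfolding circuit_def trail_def by auto
  have all: "i < length C \<Longrightarrow> (tail ep (C ! i) \<in> Y \<longleftrightarrow> tail ep (C ! 0) \<in> Y)" for i
  proof (induction i)
    case (Suc i)
    then have "i < length C" by simp
    then have "tail ep (C ! i) \<in> Y \<longleftrightarrow> head ep (C ! i) \<in> Y" using arc by auto
    moreover have "head ep (C ! i) = tail ep (C ! Suc i)" using tr Suc.prems by blast
    ultimately show ?case using Suc by auto
  qed simp
  have all2: "a' \<in> set C \<Longrightarrow> (tail ep a' \<in> Y \<longleftrightarrow> tail ep (C ! 0) \<in> Y) \<and> (head ep a' \<in> Y \<longleftrightarrow> tail ep (C ! 0) \<in> Y)" for a'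
    using all arc by (metis in_set_conv_nth)
  from assms(3) obtain a0 where "a0 \<in> set C" "tail ep a0 = b \<or> head ep a0 = b" unfolding hits_def by auto
  then have "tail ep (C ! 0) \<notin> Y" using all2 assms(4) by metis
  then show ?thesis using all2[OF assms(5)] by simp
qed

lemma adj_obtain: assumes "(x, y) \<in> adj_in W E ep"
  obtains e d where "x = ep e d" "y = ep e (\<not> d)" "e \<in> E" "ep e False \<in> W" "ep e True \<in> W"
  using assms unfolding adj_in_def by blast

lemma adj_sym: "(x, y) \<in> adj_in W E ep \<Longrightarrow> (y, x) \<in> adj_in W E ep"
proof -
  assume "(x, y) \<in> adj_in W E ep"
  then obtain e d where a: "x = ep e d" "y = ep e (\<not> d)" "e \<in> E" "ep e False \<in> W" "ep e True \<in> W"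
    by (rule adj_obtain)
  then have "(y, x) = (ep e (\<not> d), ep e (\<not> \<not> d))" by simp
  then show ?thesis using a(3-5) unfolding adj_in_def by blast
qed

lemma adj_mem: "(x, y) \<in> adj_in W E ep \<Longrightarrow> x \<in> W \<and> y \<in> W"
proof -
  assume "(x, y) \<in> adj_in W E ep"
  then obtain e d where a: "x = ep e d" "y = ep e (\<not> d)" "e \<in> E" "ep e False \<in> W" "ep e True \<in> W"
    by (rule adj_obtain)
  then show ?thesis by (cases d) auto
qed

lemma adj_edge: "e \<in> E \<Longrightarrow> ep e False \<in> W \<Longrightarrow> ep e True \<in> W \<Longrightarrow> (ep e d, ep e (\<not> d)) \<in> adj_in W E ep"
  unfolding adj_in_def by blast

lemma adj_rtrancl_sym: "(x, y) \<in> (adj_in W E ep)\<^sup>* \<Longrightarrow> (y, x) \<in> (adj_in W E ep)\<^sup>*"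
proof -
  have "sym (adj_in W E ep)" by (auto intro: symI adj_sym)
  then have "sym ((adj_in W E ep)\<^sup>*)" by (rule sym_rtrancl)
  then show "(x, y) \<in> (adj_in W E ep)\<^sup>* \<Longrightarrow> (y, x) \<in> (adj_in W E ep)\<^sup>*" by (rule symD)
qed

lemma comp_char:
  assumes "K \<in> components_minus V E ep X" "x \<in> K"
  shows "K = {u \<in> V - X. (x, u) \<in> (adj_in (V - X) E ep)\<^sup>*}"
proof -
  from assms(1) obtain v where v: "v \<in> V - X" and K: "K = {u \<in> V - X. (v, u) \<in> (adj_in (V - X) E ep)\<^sup>*}"
    unfolding components_minus_def by auto
  have "(v, x) \<in> (adj_in (V - X) E ep)\<^sup>*" using assms(2) K by auto
  then have "(x, v) \<in> (adj_in (V - X) E ep)\<^sup>*" by (rule adj_rtrancl_sym)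
  with \<open>(v, x) \<in> _\<close> show ?thesis unfolding K by (auto intro: rtrancl_trans)
qed

lemma comp_sub: "K \<in> components_minus V E ep X \<Longrightarrow> K \<subseteq> V - X"
  unfolding components_minus_def by auto

lemma comp_eq:
  assumes a: "K \<in> components_minus V E ep X" "K' \<in> components_minus V E ep X" "x \<in> K" "x \<in> K'"
  shows "K = K'"
  using comp_char[OF a(1) a(3)] comp_char[OF a(2) a(4)] by simp

lemma comp_of: assumes "u \<in> V - X" shows "\<exists>K \<in> components_minus V E ep X. u \<in> K"
proof
  show "{w \<in> V - X. (u, w) \<in> (adj_in (V - X) E ep)\<^sup>*} \<in> components_minus V E ep X"
    unfolding components_minus_def using assms by blast
  show "u \<in> {w \<in> V - X. (u, w) \<in> (adj_in (V - X) E ep)\<^sup>*}" using assms by simp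
qed

lemma edge_same_comp:
  assumes "K \<in> components_minus V E ep X" "e \<in> E" "ep e d \<in> K" "ep e (\<not> d) \<in> V - X"
  shows "ep e (\<not> d) \<in> K"
proof -
  have "ep e d \<in> V - X" using assms(1,3) comp_sub by blast
  then have "ep e False \<in> V - X" "ep e True \<in> V - X" using assms(4) by (cases d; auto)+
  then have "(ep e d, ep e (\<not> d)) \<in> adj_in (V - X) E ep" using assms(2) by (rule adj_edge[rotated])
  then show ?thesis using comp_char[OF assms(1,3)] assms(4) by auto
qed

lemma delta_ends: assumes "e \<in> delta E ep K" shows "\<exists>d. ep e d \<in> K \<and> ep e (\<not> d) \<notin> K"
proof -
  have h: "(ep e False \<in> K) \<noteq> (ep e True \<in> K)" using assms unfolding delta_def by simp
  show ?thesis
  proof (cases "ep e False \<in> K")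
    case True
    then show ?thesis using h by (intro exI[of _ False]) simp
  next
    case False
    then show ?thesis using h by (intro exI[of _ True]) simp
  qed
qed

lemma delta_comp:
  assumes g: "graph V E ep" and K: "K \<in> components_minus V E ep X" and e: "e \<in> delta E ep K"
  shows "\<exists>d. ep e d \<in> K \<and> ep e (\<not> d) \<in> X" "e \<in> delta E ep X"
proof -
  obtain d where d: "ep e d \<in> K" "ep e (\<not> d) \<notin> K" using delta_ends[OF e] by blast
  have eE: "e \<in> E" using e unfolding delta_def by auto
  have "ep e (\<not> d) \<in> V" using g eE unfolding graph_def by auto
  then have X: "ep e (\<not> d) \<in> X" using edge_same_comp[OF K eE d(1)] d(2) by blast
  then show "\<exists>d. ep e d \<in> K \<and> ep e (\<not> d) \<in> X" using d by blast
  have "ep e d \<notin> X" using d(1) comp_sub[OF K] by auto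
  then show "e \<in> delta E ep X" using X eE unfolding delta_def by (cases d) auto
qed

lemma delta_comp_disj:
  assumes g: "graph V E ep" and K: "K \<in> components_minus V E ep X" and K': "K' \<in> components_minus V E ep X"
    and e: "e \<in> delta E ep K" "e \<in> delta E ep K'"
  shows "K = K'"
proof -
  obtain d where d: "ep e d \<in> K" "ep e (\<not> d) \<in> X" using delta_comp(1)[OF g K e(1)] by blast
  obtain d' where d': "ep e d' \<in> K'" "ep e (\<not> d') \<in> X" using delta_comp(1)[OF g K' e(2)] by blast
  have "ep e d \<notin> X" "ep e d' \<notin> X" using d(1) d'(1) comp_sub[OF K] comp_sub[OF K'] by auto
  then have "d = d'" using d(2) d'(2) by (cases d; cases d') auto
  then show ?thesis using comp_eq[OF K K' d(1)] d'(1) by simp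
qed

lemma Ein_comp_disj:
  assumes g: "graph V E ep" and K: "K \<in> components_minus V E ep X" and K': "K' \<in> components_minus V E ep X"
    and e: "e \<in> E_in E ep K" "e \<in> E_in E ep K' \<union> delta E ep K'"
  shows "K = K'"
proof -
  have a: "ep e False \<in> K" "ep e True \<in> K" using e(1) unfolding E_in_def by auto
  from e(2) have "ep e False \<in> K' \<or> ep e True \<in> K'" unfolding E_in_def delta_def by auto
  then show ?thesis using a comp_eq[OF K K'] by blast
qed

lemma EinX_disj:
  assumes g: "graph V E ep" and K: "K \<in> components_minus V E ep X" and e: "e \<in> E_in E ep X"
  shows "e \<notin> E_in E ep K" "e \<notin> delta E ep K"
proof -
  show "e \<notin> E_in E ep K" using e comp_sub[OF K] unfolding E_in_def by auto
  show "e \<notin> delta E ep K"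
  proof
    assume "e \<in> delta E ep K"
    then have "e \<in> delta E ep X" by (rule delta_comp(2)[OF g K])
    then show False using e unfolding delta_def E_in_def by auto
  qed
qed

lemma cover:
  assumes g: "graph V E ep" and eE: "e \<in> E" and nX: "e \<notin> E_in E ep X"
  shows "\<exists>K \<in> components_minus V E ep X. e \<in> E_in E ep K \<or> e \<in> delta E ep K"
proof -
  have "\<not> (ep e False \<in> X \<and> ep e True \<in> X)" using nX eE unfolding E_in_def by simp
  then have "\<exists>d. ep e d \<notin> X"
  proof (cases "ep e False \<in> X")
    case True
    then show ?thesis using \<open>\<not> (ep e False \<in> X \<and> ep e True \<in> X)\<close> by (intro exI[of _ True]) simp
  next
    case False
    then show ?thesis by (intro exI[of _ False]) simp
  qed
  then obtain d where d: "ep e d \<notin> X" by (elim exE)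
  have V: "ep e d \<in> V" "ep e (\<not> d) \<in> V" using g eE unfolding graph_def by auto
  have dVX: "ep e d \<in> V - X" using V(1) d by simp
  obtain K where K: "K \<in> components_minus V E ep X" "ep e d \<in> K" using comp_of[OF dVX, of E ep] by blast
  show ?thesis
  proof (cases "ep e (\<not> d) \<in> X")
    case True
    then have "ep e (\<not> d) \<notin> K" using comp_sub[OF K(1)] by auto
    then have "e \<in> delta E ep K" using K(2) eE unfolding delta_def by (cases d) auto
    then show ?thesis using K by blast
  next
    case False
    then have "ep e (\<not> d) \<in> V - X" using V by simp
    then have "ep e (\<not> d) \<in> K" by (rule edge_same_comp[OF K(1) eE K(2)])
    then have "e \<in> E_in E ep K" using K(2) eE unfolding E_in_def by (cases d) auto
    then show ?thesis using K by blast
  qed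
qed

lemma finite_comps: "graph V E ep \<Longrightarrow> finite (components_minus V E ep X)"
proof -
  assume g: "graph V E ep"
  have "components_minus V E ep X \<subseteq> Pow V" unfolding components_minus_def by auto
  moreover have "finite V" using g unfolding graph_def by auto
  ultimately show ?thesis by (meson finite_Pow_iff finite_subset)
qed

lemma sum_ind_eq: "finite K \<Longrightarrow> (\<Sum>v\<in>K. ind (x = v)) = ind (x \<in> K)"
  unfolding ind_def by (simp add: sum.delta)

lemma degree_bit: assumes "finite E"
  shows "(of_nat (degree E ep v)::bit) = (\<Sum>p\<in>E \<times> UNIV. ind (ep (fst p) (snd p) = v))"
proof -
  have eq: "{(e, d). e \<in> E \<and> ep e d = v} = {p \<in> E \<times> UNIV. ep (fst p) (snd p) = v}" by auto
  have fin: "finite (E \<times> (UNIV::bool set))" using assms by simp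
  show ?thesis unfolding degree_def eq by (rule card_bit[OF fin])
qed

lemma handshake: assumes fE: "finite E" and fK: "finite K" and ev: "\<forall>v\<in>K. even (degree E ep v)"
  shows "even (card (delta E ep K))"
proof -
  have "delta E ep K = {e\<in>E. e \<in> delta E ep K}" by (auto simp: delta_def)
  then have "(of_nat (card (delta E ep K))::bit) = (\<Sum>e\<in>E. ind (e \<in> delta E ep K))"
    using card_bit[OF fE, of "\<lambda>e. e \<in> delta E ep K"] by simp
  also have "\<dots> = (\<Sum>e\<in>E. \<Sum>d\<in>UNIV. ind (ep e d \<in> K))"
  proof (rule sum.cong[OF HOL.refl])
    fix e assume "e \<in> E"
    then have "ind (e \<in> delta E ep K) = ind (ep e False \<in> K) + ind (ep e (\<not> False) \<in> K)"
      by (rule ind_delta)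
    then show "ind (e \<in> delta E ep K) = (\<Sum>d\<in>UNIV. ind (ep e d \<in> K))"
      by (simp add: UNIV_bool)
  qed
  also have "\<dots> = (\<Sum>p\<in>E \<times> UNIV. ind (ep (fst p) (snd p) \<in> K))"
    by (simp add: sum.cartesian_product split_beta)
  also have "\<dots> = (\<Sum>p\<in>E \<times> UNIV. \<Sum>v\<in>K. ind (ep (fst p) (snd p) = v))"
    using sum_ind_eq[OF fK] by simp
  also have "\<dots> = (\<Sum>v\<in>K. \<Sum>p\<in>E \<times> UNIV. ind (ep (fst p) (snd p) = v))"
    by (rule sum.swap)
  also have "\<dots> = (\<Sum>v\<in>K. (0::bit))"
  proof (rule sum.cong[OF HOL.refl])
    fix v assume "v \<in> K"
    then have "even (degree E ep v)" using ev by blast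
    then have "(of_nat (degree E ep v)::bit) = 0" by (simp only: bit_of_nat_0)
    then show "(\<Sum>p\<in>E \<times> UNIV. ind (ep (fst p) (snd p) = v)) = 0" using degree_bit[OF fE, of ep v] by simp
  qed
  finally have "(of_nat (card (delta E ep K))::bit) = 0" by simp
  then show ?thesis by (simp only: bit_of_nat_0)
qed

lemma escape: "(x, y) \<in> r\<^sup>* \<Longrightarrow> x \<in> K \<Longrightarrow> y \<notin> K \<Longrightarrow> \<exists>p q. (p, q) \<in> r \<and> p \<in> K \<and> q \<notin> K"
proof (induction rule: rtrancl_induct)
  case base
  then show ?case by simp
next
  case (step y z)
  show ?case
  proof (cases "y \<in> K")
    case True
    then have "(y, z) \<in> r \<and> y \<in> K \<and> z \<notin> K" using step.hyps(2) step.prems(2) by simp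
    then show ?thesis by (intro exI)
  next
    case False
    show ?thesis by (rule step.IH[OF step.prems(1) False])
  qed
qed

lemma comp_delta_ne:
  assumes eu: "eulerian V E ep" and XV: "X \<subseteq> V" and bX: "b \<in> X" and K: "K \<in> components_minus V E ep X"
  shows "delta E ep K \<noteq> {}"
proof -
  from K obtain v where v: "v \<in> V - X" and Kd: "K = {u \<in> V - X. (v, u) \<in> (adj_in (V - X) E ep)\<^sup>*}"
    unfolding components_minus_def by auto
  have vK: "v \<in> K" using v Kd by simp
  have bK: "b \<notin> K" using bX comp_sub[OF K] by auto
  have "(v, b) \<in> (adj_in V E ep)\<^sup>*" using eu v bX XV unfolding eulerian_def connected_graph_def by blast
  then obtain p q where pq: "(p, q) \<in> adj_in V E ep" "p \<in> K" "q \<notin> K" using escape[OF _ vK bK] by blast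
  then obtain e d where a: "p = ep e d" "q = ep e (\<not> d)" "e \<in> E" by (elim adj_obtain)
  then have "e \<in> delta E ep K" using pq unfolding delta_def by (cases d) auto
  then show ?thesis by blast
qed

lemma comps_bound:
  assumes eu: "eulerian V E ep" and XV: "X \<subseteq> V" and bX: "b \<in> X" and S: "S \<subseteq> components_minus V E ep X"
  shows "2 * card S \<le> card (delta E ep X)"
proof -
  have g: "graph V E ep" using eu unfolding eulerian_def by simp
  have fE: "finite E" and fV: "finite V" using g unfolding graph_def by auto
  have fS: "finite S" using finite_comps[OF g] S by (rule finite_subset[rotated])
  have fd: "finite (delta E ep Y)" for Y using fE unfolding delta_def by simp
  have two: "2 \<le> card (delta E ep K)" if "K \<in> S" for K
  proof -
    have K: "K \<in> components_minus V E ep X" using that S by auto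
    have "finite K" using comp_sub[OF K] fV by (meson finite_Diff finite_subset)
    moreover have "\<forall>v\<in>K. even (degree E ep v)" using eu comp_sub[OF K] unfolding eulerian_def by auto
    ultimately have ev: "even (card (delta E ep K))" using handshake[OF fE] by blast
    have nz: "card (delta E ep K) \<noteq> 0" using comp_delta_ne[OF eu XV bX K] fd by simp
    from ev obtain k where k: "card (delta E ep K) = 2 * k" by (elim evenE)
    then have "k \<noteq> 0" using nz by simp
    then show ?thesis using k by simp
  qed
  have "2 * card S = (\<Sum>K\<in>S. 2)" by simp
  also have "\<dots> \<le> (\<Sum>K\<in>S. card (delta E ep K))" using two by (rule sum_mono)
  also have "\<dots> = card (\<Union>K\<in>S. delta E ep K)"
  proof (rule card_UN_disjoint[symmetric, OF fS])
    show "\<forall>K\<in>S. finite (delta E ep K)" using fd by simp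
    show "\<forall>K\<in>S. \<forall>K'\<in>S. K \<noteq> K' \<longrightarrow> delta E ep K \<inter> delta E ep K' = {}"
      using delta_comp_disj[OF g] S by blast
  qed
  also have "\<dots> \<le> card (delta E ep X)"
  proof (rule card_mono[OF fd])
    show "(\<Union>K\<in>S. delta E ep K) \<subseteq> delta E ep X" using delta_comp(2)[OF g] S by blast
  qed
  finally show ?thesis .
qed

lemma card_partition_idx:
  assumes "finite I" "\<And>i. i \<in> I \<Longrightarrow> finite (F i)"
    "\<And>i j. i \<in> I \<Longrightarrow> j \<in> I \<Longrightarrow> i \<noteq> j \<Longrightarrow> F i \<inter> F j = {}" "A \<subseteq> (\<Union>i\<in>I. F i)"
  shows "card A = (\<Sum>i\<in>I. card (F i \<inter> A))"
proof -
  have "A = (\<Union>i\<in>I. F i \<inter> A)" using assms(4) by blast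
  then have "card A = card (\<Union>i\<in>I. F i \<inter> A)" by simp
  also have "\<dots> = (\<Sum>i\<in>I. card (F i \<inter> A))"
  proof (rule card_UN_disjoint[OF assms(1)])
    show "\<forall>i\<in>I. finite (F i \<inter> A)" using assms(2) by blast
    show "\<forall>i\<in>I. \<forall>j\<in>I. i \<noteq> j \<longrightarrow> F i \<inter> A \<inter> (F j \<inter> A) = {}" using assms(3) by blast
  qed
  finally show ?thesis .
qed

lemma sum_div2: assumes "\<And>i. i \<in> I \<Longrightarrow> even (c i :: nat)"
  shows "(\<Sum>i\<in>I. c i) div 2 = (\<Sum>i\<in>I. c i div 2)"
proof -
  have "(\<Sum>i\<in>I. c i) = (\<Sum>i\<in>I. 2 * (c i div 2))"
    using assms by (intro sum.cong) auto
  also have "\<dots> = 2 * (\<Sum>i\<in>I. c i div 2)" by (rule sum_distrib_left[symmetric])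
  finally show ?thesis by simp
qed

lemma wcount_filter: "wcount g (A \<inter> B) = card (A \<inter> {e \<in> B. g e = 1})"
  unfolding wcount_def by (rule arg_cong[where f=card]) blast

lemma circ_no_delta:
  assumes C: "circuit E ep C" and hb: "hits ep C b" and bK: "b \<notin> K"
    and nd: "fst ` set C \<inter> delta E ep K = {}"
  shows "fst ` set C \<inter> E_in E ep K = {}"
proof (rule ccontr)
  assume "fst ` set C \<inter> E_in E ep K \<noteq> {}"
  then obtain a where a: "a \<in> set C" "fst a \<in> E_in E ep K" by blast
  have "tail ep a \<notin> K \<and> head ep a \<notin> K" by (rule circ_side[OF C nd hb bK a(1)])
  moreover have "tail ep a \<in> K" using a(2) unfolding E_in_def tail_def by (cases "snd a") auto
  ultimately show False by simp
qed

lemma circuit_bound: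
  assumes g: "graph V E ep" and bX: "b \<in> X"
    and C: "circuit E ep C" and hb: "hits ep C b" and oddw: "odd (wcount \<gamma>' (fst ` set C))"
    and S: "S \<subseteq> components_minus V E ep X"
    and Sodd: "\<And>K. K \<in> S \<Longrightarrow> odd (wcount \<gamma>' (fst ` set C \<inter> (E_in E ep K \<union> delta E ep K))
                                      + card (fst ` set C \<inter> delta E ep K) div 2)"
  shows "2 + 2 * card S \<le> 2 * wcount \<gamma>' (fst ` set C \<inter> E_in E ep X) + card (fst ` set C \<inter> delta E ep X)"
proof (rule ccontr)
  let ?F = "fst ` set C"
  let ?comps = "components_minus V E ep X"
  assume contra: "\<not> ?thesis"
  have fF: "finite ?F" and FE: "?F \<subseteq> E" using circ_basic[OF C] by auto
  have fS: "finite S" using finite_comps[OF g] S by (rule finite_subset[rotated])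
  have bK: "b \<notin> K" if "K \<in> ?comps" for K using comp_sub[OF that] bX by auto
  have two: "2 \<le> card (?F \<inter> delta E ep K)" if KS: "K \<in> S" for K
  proof -
    have K: "K \<in> ?comps" using KS S by auto
    have ne: "?F \<inter> delta E ep K \<noteq> {}"
    proof
      assume em: "?F \<inter> delta E ep K = {}"
      then have "?F \<inter> E_in E ep K = {}" by (rule circ_no_delta[OF C hb bK[OF K]])
      with em have "?F \<inter> (E_in E ep K \<union> delta E ep K) = {}" by blast
      then have "wcount \<gamma>' (?F \<inter> (E_in E ep K \<union> delta E ep K)) = 0" unfolding wcount_def by simp
      then show False using Sodd[OF KS] em by simp
    qed
    have nz: "card (?F \<inter> delta E ep K) \<noteq> 0" using ne fF by simp
    from circ_delta_even[OF C, of K] obtain k where k: "card (?F \<inter> delta E ep K) = 2 * k" by (elim evenE)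
    then have "k \<noteq> 0" using nz by simp
    then show ?thesis using k by simp
  qed
  let ?D = "\<Union>K\<in>S. ?F \<inter> delta E ep K"
  have DX: "?D \<subseteq> ?F \<inter> delta E ep X" using delta_comp(2)[OF g] S by blast
  have fD: "finite (?F \<inter> delta E ep X)" using fF by simp
  have cardD: "card ?D = (\<Sum>K\<in>S. card (?F \<inter> delta E ep K))"
  proof (rule card_UN_disjoint[OF fS])
    show "\<forall>K\<in>S. finite (?F \<inter> delta E ep K)" using fF by simp
    show "\<forall>K\<in>S. \<forall>K'\<in>S. K \<noteq> K' \<longrightarrow> ?F \<inter> delta E ep K \<inter> (?F \<inter> delta E ep K') = {}"
      using delta_comp_disj[OF g] S by blast
  qed
  have s2: "2 * card S \<le> (\<Sum>K\<in>S. card (?F \<inter> delta E ep K))"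
  proof -
    have "2 * card S = (\<Sum>K\<in>S. 2)" by simp
    also have "\<dots> \<le> (\<Sum>K\<in>S. card (?F \<inter> delta E ep K))" using two by (rule sum_mono)
    finally show ?thesis .
  qed
  have cD: "card ?D \<le> card (?F \<inter> delta E ep X)" using card_mono[OF fD DX] .
  have evX: "even (card (?F \<inter> delta E ep X))" by (rule circ_delta_even[OF C])
  define a where "a = wcount \<gamma>' (?F \<inter> E_in E ep X)"
  define c where "c = card (?F \<inter> delta E ep X)"
  have c1: "\<not> 2 + 2 * card S \<le> 2 * a + c" using contra unfolding a_def c_def .
  have c2: "2 * card S \<le> c" using s2 cardD cD unfolding c_def by simp
  have c3: "even c" using evX unfolding c_def .
  from c3 obtain m where m: "c = 2 * m" by (elim evenE)
  have a0: "a = 0" and cS: "c = 2 * card S" using c1 c2 m by simp_all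
  have Deq: "?D = ?F \<inter> delta E ep X"
    using card_subset_eq[OF fD DX] cardD s2 cD cS unfolding c_def by simp
  have each2: "card (?F \<inter> delta E ep K) = 2" if KS: "K \<in> S" for K
  proof (rule ccontr)
    assume "card (?F \<inter> delta E ep K) \<noteq> 2"
    then have lt: "2 < card (?F \<inter> delta E ep K)" using two[OF KS] by simp
    have "(\<Sum>K\<in>S. 2) < (\<Sum>K\<in>S. card (?F \<inter> delta E ep K))"
      by (rule sum_strict_mono_ex1[OF fS]) (use two KS lt in auto)
    then have "2 * card S < card ?D" using cardD by simp
    then show False using cD cS unfolding c_def by simp
  qed
  have evK: "even (wcount \<gamma>' (?F \<inter> (E_in E ep K \<union> delta E ep K)))" if KS: "K \<in> S" for K
    using Sodd[OF KS] each2[OF KS] by simp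
  have inS: "K \<in> S" if K: "K \<in> ?comps" and e: "e \<in> ?F" "e \<in> delta E ep K" for K e
  proof -
    have "e \<in> ?F \<inter> delta E ep X" using delta_comp(2)[OF g K e(2)] e(1) by simp
    then have "e \<in> ?D" using Deq by simp
    then obtain K' where K': "K' \<in> S" "e \<in> delta E ep K'" by blast
    have "K = K'" using delta_comp_disj[OF g K _ e(2) K'(2)] K'(1) S by blast
    then show ?thesis using K'(1) by simp
  qed
  have cov: "?F \<subseteq> E_in E ep X \<union> (\<Union>K\<in>S. E_in E ep K \<union> delta E ep K)"
  proof
    fix e assume eF: "e \<in> ?F"
    then have eE: "e \<in> E" using FE by auto
    show "e \<in> E_in E ep X \<union> (\<Union>K\<in>S. E_in E ep K \<union> delta E ep K)"
    proof (cases "e \<in> E_in E ep X")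
      case False
      then obtain K where K: "K \<in> ?comps" "e \<in> E_in E ep K \<or> e \<in> delta E ep K"
        using cover[OF g eE] by blast
      have "K \<in> S"
      proof (cases "e \<in> delta E ep K")
        case True
        then show ?thesis using inS[OF K(1) eF] by simp
      next
        case False
        then have "e \<in> ?F \<inter> E_in E ep K" using K(2) eF by simp
        then have "?F \<inter> delta E ep K \<noteq> {}" using circ_no_delta[OF C hb bK[OF K(1)]] by blast
        then obtain e' where "e' \<in> ?F" "e' \<in> delta E ep K" by blast
        then show ?thesis using inS[OF K(1)] by simp
      qed
      then show ?thesis using K(2) by blast
    qed simp
  qed
  let ?T = "{e \<in> ?F. \<gamma>' e = 1}"
  have fT: "finite ?T" using fF by simp
  have Tsplit: "?T = (?T \<inter> E_in E ep X) \<union> (\<Union>K\<in>S. ?T \<inter> (E_in E ep K \<union> delta E ep K))"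
    using cov by blast
  have disj1: "(?T \<inter> E_in E ep X) \<inter> (\<Union>K\<in>S. ?T \<inter> (E_in E ep K \<union> delta E ep K)) = {}"
  proof -
    have "e \<notin> E_in E ep X" if "K \<in> S" "e \<in> E_in E ep K \<union> delta E ep K" for K e
      using EinX_disj[OF g, of K X e] that S by blast
    then show ?thesis by blast
  qed
  have disj2: "\<forall>K\<in>S. \<forall>K'\<in>S. K \<noteq> K' \<longrightarrow>
      ?T \<inter> (E_in E ep K \<union> delta E ep K) \<inter> (?T \<inter> (E_in E ep K' \<union> delta E ep K')) = {}"
  proof (intro ballI impI)
    fix K K' assume KK: "K \<in> S" "K' \<in> S" "K \<noteq> K'"
    have K: "K \<in> ?comps" "K' \<in> ?comps" using KK S by auto
    show "?T \<inter> (E_in E ep K \<union> delta E ep K) \<inter> (?T \<inter> (E_in E ep K' \<union> delta E ep K')) = {}"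
    proof (rule ccontr)
      assume "?T \<inter> (E_in E ep K \<union> delta E ep K) \<inter> (?T \<inter> (E_in E ep K' \<union> delta E ep K')) \<noteq> {}"
      then obtain e where e: "e \<in> E_in E ep K \<union> delta E ep K" "e \<in> E_in E ep K' \<union> delta E ep K'" by blast
      have "K = K'"
      proof (cases "e \<in> E_in E ep K")
        case True
        show ?thesis by (rule Ein_comp_disj[OF g K(1) K(2) True e(2)])
      next
        case False
        then have eK: "e \<in> delta E ep K" using e(1) by simp
        show ?thesis
        proof (cases "e \<in> E_in E ep K'")
          case True
          have "e \<in> E_in E ep K \<union> delta E ep K" using eK by simp
          then show ?thesis using Ein_comp_disj[OF g K(2) K(1) True] by simp
        next
          case False
          then have "e \<in> delta E ep K'" using e(2) by simp
          then show ?thesis using delta_comp_disj[OF g K(1) K(2) eK] by simp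
        qed
      qed
      then show False using KK(3) by simp
    qed
  qed
  have "card ?T = card (?T \<inter> E_in E ep X) + card (\<Union>K\<in>S. ?T \<inter> (E_in E ep K \<union> delta E ep K))"
    using card_Un_disjoint[of "?T \<inter> E_in E ep X" "\<Union>K\<in>S. ?T \<inter> (E_in E ep K \<union> delta E ep K)"] Tsplit disj1 fT
    by (metis (no_types, lifting) finite_Un)
  also have "card (\<Union>K\<in>S. ?T \<inter> (E_in E ep K \<union> delta E ep K)) = (\<Sum>K\<in>S. card (?T \<inter> (E_in E ep K \<union> delta E ep K)))"
    by (rule card_UN_disjoint[OF fS _ disj2]) (use fT in simp)
  finally have cT: "card ?T = card (?T \<inter> E_in E ep X) + (\<Sum>K\<in>S. card (?T \<inter> (E_in E ep K \<union> delta E ep K)))" .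
  have wc: "wcount \<gamma>' (?F \<inter> Y) = card (?T \<inter> Y)" for Y
    unfolding wcount_def by (rule arg_cong[where f=card]) blast
  have "card (?T \<inter> E_in E ep X) = 0" using a0 wc[of "E_in E ep X"] unfolding a_def by simp
  moreover have "even (\<Sum>K\<in>S. card (?T \<inter> (E_in E ep K \<union> delta E ep K)))"
    using evK wc by (intro dvd_sum) simp
  ultimately have "even (card ?T)" using cT by simp
  then show False using oddw unfolding wcount_def by simp
qed

lemma main_bound:
  assumes eu: "eulerian V E ep" and XV: "X \<subseteq> V" and bX: "b \<in> X"
    and sh: "is_shifting V E ep \<gamma> \<gamma>'"
    and dec: "circuit_decomposition E ep Cs" and ok: "\<forall>C\<in>set Cs. weight \<gamma> C \<noteq> 0 \<and> hits ep C b"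
  shows "2 * length Cs + 2 * odd_components V E ep \<gamma>' X
         \<le> 2 * wcount \<gamma>' (E_in E ep X) + card (delta E ep X)"
proof -
  have g: "graph V E ep" using eu unfolding eulerian_def by simp
  have fE: "finite E" using g unfolding graph_def by simp
  define n where "n = length Cs"
  define F where "F i = fst ` set (Cs ! i)" for i
  let ?comps = "components_minus V E ep X"
  have circ: "circuit E ep (Cs ! i)" if "i < n" for i
    using dec that unfolding circuit_decomposition_def n_def by simp
  have okC: "weight \<gamma> (Cs ! i) \<noteq> 0" "hits ep (Cs ! i) b" if "i < n" for i
    using ok that unfolding n_def by simp_all
  have FE: "F i \<subseteq> E" "finite (F i)" if "i < n" for i
    using circ_basic[OF circ[OF that]] unfolding F_def by auto
  have uniq: "\<forall>e\<in>E. \<exists>!i. i < n \<and> e \<in> F i"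
    using dec unfolding circuit_decomposition_def n_def F_def by simp
  have disjF: "F i \<inter> F j = {}" if "i \<in> {..<n}" "j \<in> {..<n}" "i \<noteq> j" for i j
  proof (rule ccontr)
    assume "F i \<inter> F j \<noteq> {}"
    then obtain e where e: "e \<in> F i" "e \<in> F j" by blast
    then have "e \<in> E" using FE that by auto
    then have "\<exists>!i. i < n \<and> e \<in> F i" using uniq by blast
    then show False using e that by auto
  qed
  have covF: "E \<subseteq> (\<Union>i\<in>{..<n}. F i)" using uniq by blast
  have part: "card A = (\<Sum>i<n. card (F i \<inter> A))" if "A \<subseteq> E" for A
  proof (rule card_partition_idx)
    show "finite {..<n}" by simp
    show "\<And>i. i \<in> {..<n} \<Longrightarrow> finite (F i)" using FE by simp
    show "\<And>i j. i \<in> {..<n} \<Longrightarrow> j \<in> {..<n} \<Longrightarrow> i \<noteq> j \<Longrightarrow> F i \<inter> F j = {}" by (rule disjF)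
    show "A \<subseteq> (\<Union>i\<in>{..<n}. F i)" using that covF by blast
  qed
  have wpart: "wcount \<gamma>' A = (\<Sum>i<n. wcount \<gamma>' (F i \<inter> A))" if "A \<subseteq> E" for A
  proof -
    have "wcount \<gamma>' A = card {e \<in> A. \<gamma>' e = 1}" unfolding wcount_def ..
    also have "\<dots> = (\<Sum>i<n. card (F i \<inter> {e \<in> A. \<gamma>' e = 1}))" using that by (intro part) auto
    also have "\<dots> = (\<Sum>i<n. wcount \<gamma>' (F i \<inter> A))" by (simp add: wcount_filter)
    finally show ?thesis .
  qed
  have oddw: "odd (wcount \<gamma>' (F i))" if "i < n" for i
  proof -
    have "weight \<gamma>' (Cs ! i) = weight \<gamma> (Cs ! i)" by (rule shifting_weight[OF sh circ[OF that]])
    then have "weight \<gamma>' (Cs ! i) \<noteq> 0" using okC[OF that] by simp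
    then have "(of_nat (wcount \<gamma>' (F i))::bit) \<noteq> 0"
      using weight_card[OF circ[OF that], of \<gamma>'] unfolding wcount_def F_def by simp
    then show ?thesis using bit_of_nat_0 by blast
  qed
  define Odd where "Odd = {K \<in> ?comps. odd_set E ep \<gamma>' K}"
  have OddC: "Odd \<subseteq> ?comps" unfolding Odd_def by blast
  have fOdd: "finite Odd" using finite_comps[OF g] OddC by (rule finite_subset[rotated])
  define gK where "gK i K = wcount \<gamma>' (F i \<inter> (E_in E ep K \<union> delta E ep K)) + card (F i \<inter> delta E ep K) div 2" for i K
  have ex: "\<exists>i. i < n \<and> odd (gK i K)" if KO: "K \<in> Odd" for K
  proof (rule ccontr)
    assume "\<not> ?thesis"
    then have allev: "even (gK i K)" if "i \<in> {..<n}" for i using that by auto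
    have A1: "E_in E ep K \<union> delta E ep K \<subseteq> E" unfolding E_in_def delta_def by auto
    have dK: "delta E ep K \<subseteq> E" unfolding delta_def by auto
    have "card (delta E ep K) div 2 = (\<Sum>i<n. card (F i \<inter> delta E ep K)) div 2" using part[OF dK] by simp
    also have "\<dots> = (\<Sum>i<n. card (F i \<inter> delta E ep K) div 2)"
    proof (rule sum_div2)
      fix i assume "i \<in> {..<n}"
      then have "circuit E ep (Cs ! i)" using circ by simp
      then show "even (card (F i \<inter> delta E ep K))" unfolding F_def by (rule circ_delta_even)
    qed
    finally have h2: "card (delta E ep K) div 2 = (\<Sum>i<n. card (F i \<inter> delta E ep K) div 2)" .
    have "(\<Sum>i<n. gK i K) = wcount \<gamma>' (E_in E ep K \<union> delta E ep K) + card (delta E ep K) div 2"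
      unfolding gK_def sum.distrib h2 wpart[OF A1] ..
    moreover have "even (\<Sum>i<n. gK i K)" using allev by (intro dvd_sum) simp
    moreover have "odd_set E ep \<gamma>' K" using KO unfolding Odd_def by simp
    ultimately show False unfolding odd_set_def by simp
  qed
  then have "\<forall>K\<in>Odd. \<exists>i. i < n \<and> odd (gK i K)" by blast
  then obtain ch where ch: "\<forall>K\<in>Odd. ch K < n \<and> odd (gK (ch K) K)" by (metis bchoice)
  define SS where "SS i = {K \<in> Odd. ch K = i}" for i
  have per: "2 + 2 * card (SS i) \<le> 2 * wcount \<gamma>' (F i \<inter> E_in E ep X) + card (F i \<inter> delta E ep X)"
    if "i \<in> {..<n}" for i
  proof -
    have i: "i < n" using that by simp
    show ?thesis unfolding F_def
    proof (rule circuit_bound[OF g bX circ[OF i] okC(2)[OF i]])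
      show "odd (wcount \<gamma>' (fst ` set (Cs ! i)))" using oddw[OF i] unfolding F_def .
      show "SS i \<subseteq> ?comps" using OddC unfolding SS_def by blast
      fix K assume "K \<in> SS i"
      then have "K \<in> Odd" "ch K = i" unfolding SS_def by auto
      then show "odd (wcount \<gamma>' (fst ` set (Cs ! i) \<inter> (E_in E ep K \<union> delta E ep K))
                 + card (fst ` set (Cs ! i) \<inter> delta E ep K) div 2)"
        using ch unfolding gK_def F_def by auto
    qed
  qed
  have cOdd: "card Odd = (\<Sum>i<n. card (SS i))"
  proof -
    have "card Odd = (\<Sum>i\<in>{..<n}. card (SS i \<inter> Odd))"
    proof (rule card_partition_idx)
      show "finite {..<n}" by simp
      show "\<And>i. i \<in> {..<n} \<Longrightarrow> finite (SS i)" using fOdd unfolding SS_def by simp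
      show "\<And>i j. i \<in> {..<n} \<Longrightarrow> j \<in> {..<n} \<Longrightarrow> i \<noteq> j \<Longrightarrow> SS i \<inter> SS j = {}" unfolding SS_def by blast
      show "Odd \<subseteq> (\<Union>i\<in>{..<n}. SS i)" using ch unfolding SS_def by blast
    qed
    moreover have "SS i \<inter> Odd = SS i" for i unfolding SS_def by blast
    ultimately show ?thesis by simp
  qed
  have EX: "E_in E ep X \<subseteq> E" "delta E ep X \<subseteq> E" unfolding E_in_def delta_def by auto
  have "(\<Sum>i<n. 2 + 2 * card (SS i)) \<le> (\<Sum>i<n. 2 * wcount \<gamma>' (F i \<inter> E_in E ep X) + card (F i \<inter> delta E ep X))"
    using per by (rule sum_mono)
  moreover have "(\<Sum>i<n. 2 + 2 * card (SS i)) = 2 * n + 2 * card Odd"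
  proof -
    have "(\<Sum>i<n. 2 + 2 * card (SS i)) = (\<Sum>i<n. 2) + (\<Sum>i<n. 2 * card (SS i))"
      by (rule sum.distrib)
    also have "\<dots> = 2 * n + 2 * (\<Sum>i<n. card (SS i))" by (simp add: sum_distrib_left)
    finally show ?thesis using cOdd by simp
  qed
  moreover have "(\<Sum>i<n. 2 * wcount \<gamma>' (F i \<inter> E_in E ep X) + card (F i \<inter> delta E ep X))
      = 2 * wcount \<gamma>' (E_in E ep X) + card (delta E ep X)"
    by (simp add: sum.distrib sum_distrib_left wpart[OF EX(1)] part[OF EX(2)])
  moreover have "odd_components V E ep \<gamma>' X = card Odd" unfolding odd_components_def Odd_def ..
  ultimately show ?thesis unfolding n_def by simp
qed

theorem mainTheorem2:
  fixes V :: "'v set" and E :: "'e set" and ep :: "'e \<Rightarrow> bool \<Rightarrow> 'v"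
    and \<gamma> \<gamma>' :: "'e \<Rightarrow> bit" and b :: 'v and X :: "'v set"
  assumes "eulerian V E ep"
    and "b \<in> V"
    and "is_shifting V E ep \<gamma> \<gamma>'"
    and "X \<subseteq> V"
    and "b \<in> X"
  shows "real (flooding_number V E ep \<gamma> b)
         \<le> real (wcount \<gamma>' (E_in E ep X)) + real (card (delta E ep X)) / 2
           - real (odd_components V E ep \<gamma>' X)"
proof -
  let ?W = "wcount \<gamma>' (E_in E ep X)"
  let ?D = "card (delta E ep X)"
  let ?O = "odd_components V E ep \<gamma>' X"
  define M where "M = {0} \<union> {length Cs | Cs. circuit_decomposition E ep Cs \<and>
      (\<forall>C\<in>set Cs. weight \<gamma> C \<noteq> 0 \<and> hits ep C b)}"
  have bnd: "2 * k + 2 * ?O \<le> 2 * ?W + ?D" if kM: "k \<in> M" for k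
  proof (cases "k = 0")
    case True
    have "2 * card {K \<in> components_minus V E ep X. odd_set E ep \<gamma>' K} \<le> ?D"
      by (rule comps_bound[OF assms(1) assms(4) assms(5)]) blast
    then show ?thesis using True unfolding odd_components_def by simp
  next
    case False
    then obtain Cs where "k = length Cs" "circuit_decomposition E ep Cs"
      "\<forall>C\<in>set Cs. weight \<gamma> C \<noteq> 0 \<and> hits ep C b" using kM False unfolding M_def by blast
    then show ?thesis using main_bound[OF assms(1) assms(4) assms(5) assms(3)] by simp
  qed
  have "M \<subseteq> {..?W + ?D}"
  proof
    fix k assume "k \<in> M"
    then have "2 * k + 2 * ?O \<le> 2 * ?W + ?D" by (rule bnd)
    then show "k \<in> {..?W + ?D}" by simp
  qed
  then have fM: "finite M" by (rule finite_subset) simp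
  have "M \<noteq> {}" unfolding M_def by simp
  then have "Max M \<in> M" using fM by (intro Max_in)
  then have "2 * Max M + 2 * ?O \<le> 2 * ?W + ?D" by (rule bnd)
  then have "real (2 * Max M + 2 * ?O) \<le> real (2 * ?W + ?D)" by (simp only: of_nat_le_iff)
  then have "2 * real (Max M) + 2 * real ?O \<le> 2 * real ?W + real ?D" by simp
  moreover have "flooding_number V E ep \<gamma> b = Max M" unfolding flooding_number_def M_def ..
  ultimately show ?thesis by simp
qed

end
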